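(* Let $q$ be odd and let $C$ be an $[n,k]$ code over $\mathbb{F}_q$ with $C^\perp\neq\{\bm 0\}$ and $d(C^\perp)>3$. Then $\gamma(C)\le k-d(C^\perp)+2$.
   Context: An $[n,k]$ code over $\mathbb{F}_q$ is a $k$-dimensional subspace $C\subseteq\mathbb{F}_q^n$; write $E=\{1,\dots,n\}$. For $\bm{x}\in\mathbb{F}_q^n$, $\mathrm{supp}(\bm{x})=\{i: x_i\neq 0\}$ and the weight is $|\mathrm{supp}(\bm{x})|$; for $B\subseteq\mathbb{F}_q^n$, $\mathrm{Supp}(B)=\bigcup_{\bm{x}\in B}\mathrm{supp}(\bm{x})$. $C^\perp$ is the dual code with respect to the standard inner product and $d(C^\perp)$ is the minimum weight of a nonzero codeword of $C^\perp$. The covering dimension is $\gamma(C)=\infty$ if $\mathrm{Supp}(C)\neq E$, and otherwise $\gamma(C)$ is the least positive integer $r$ such that $C$ has an $r$-dimensional subspace $D$ with $\mathrm{Supp}(D)=E$. *)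

theory Defs
  imports "HOL-Analysis.Analysis" "HOL-Library.Extended_Nat"
begin

text \<open>Codes of length n over a finite field 'a are subspaces of 'a^'n, where the
  finite index type 'n plays the role of E = {1..n} (so n = CARD('n)).\<close>

definition supp :: "('a::zero)^'n \<Rightarrow> 'n set" where
  "supp x = {i. x $ i \<noteq> 0}"

definition weight :: "('a::zero)^'n \<Rightarrow> nat" where
  "weight x = card (supp x)"

definition Supp :: "(('a::zero)^'n) set \<Rightarrow> 'n set" where
  "Supp B = (\<Union>x\<in>B. supp x)"

definition dual_code :: "(('a::field)^'n) set \<Rightarrow> ('a^'n) set" where
  "dual_code C = {y. \<forall>x\<in>C. (\<Sum>i\<in>UNIV. x $ i * y $ i) = 0}"

definition min_dist :: "(('a::field)^'n) set \<Rightarrow> nat" where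
  "min_dist C = Min (weight ` (C - {0}))"

definition covering_dim :: "(('a::field)^'n::finite) set \<Rightarrow> enat" where
  "covering_dim C =
     (if Supp C \<noteq> UNIV then \<infinity>
      else enat (LEAST r. 0 < r \<and>
             (\<exists>D. vec.subspace D \<and> D \<subseteq> C \<and> vec.dim D = r \<and> Supp D = UNIV)))"

end

theory Submission imports Defs begin

lemma annih:
  fixes V :: "('a::field^'n::finite) set"
  assumes V: "vec.subspace V" and v: "v \<notin> V"
  shows "\<exists>y. (\<forall>x\<in>V. (\<Sum>i\<in>UNIV. x$i * y$i) = 0) \<and> (\<Sum>i\<in>UNIV. v$i * y$i) \<noteq> 0"
proof -
  obtain B where B: "B \<subseteq> V" "vec.independent B" "V \<subseteq> vec.span B"
    using vec.basis_exists[of V] by metis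
  have spB: "vec.span B = V" using vec.span_subspace[OF B(1) B(3) V] .
  have vB: "v \<notin> vec.span B" using spB v by simp
  have ind: "vec.independent (insert v B)" using B(2) vB vec.independent_insert
    by (metis vec.span_base)
  define i0 :: 'n where "i0 = undefined"
  obtain g where g: "Vector_Spaces.linear (*s) (*s) g"
    "\<forall>x\<in>insert v B. g x = (if x = v then axis i0 1 else 0)"
    using vec.linear_independent_extend[OF ind, of "\<lambda>x. if x = v then axis i0 1 else 0"] by blast
  interpret g: Vector_Spaces.linear "(*s)" "(*s)" g by (rule g(1))
  define y where "y = (\<chi> i. g (axis i 1) $ i0)"
  have comp: "(g x) $ i0 = (\<Sum>i\<in>UNIV. x$i * y$i)" for x
    unfolding y_def vec_lambda_beta by (rule linear_componentwise[OF g(1)])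
  have "\<forall>x\<in>V. g x = 0"
  proof
    fix x assume "x \<in> V"
    then have "x \<in> vec.span B" using spB by simp
    moreover have "\<forall>b\<in>B. g b = 0" using g(2) vB vec.span_base by fastforce
    ultimately show "g x = 0" using g.eq_0_on_span by blast
  qed
  moreover have "g v $ i0 = 1" using g(2) by (simp add: axis_def)
  ultimately show ?thesis using comp
    by (metis vec_lambda_beta zero_vec_def zero_neq_one)
qed

lemma dual_subspace: "vec.subspace (dual_code C)"
  unfolding vec.subspace_def dual_code_def
proof (intro conjI allI ballI impI CollectI)
  fix c :: 'a and x assume x: "x \<in> {y. \<forall>x\<in>C. (\<Sum>i\<in>UNIV. x $ i * y $ i) = 0}"
  fix w assume "w \<in> C"
  then have "(\<Sum>i\<in>UNIV. w $ i * x $ i) = 0" using x by blast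
  then have "c * (\<Sum>i\<in>UNIV. w $ i * x $ i) = 0" by simp
  moreover have "c * (\<Sum>i\<in>UNIV. w $ i * x $ i) = (\<Sum>i\<in>UNIV. w $ i * (c *s x) $ i)"
    by (simp add: sum_distrib_left algebra_simps)
  ultimately show "(\<Sum>i\<in>UNIV. w $ i * (c *s x) $ i) = 0" by simp
next
  fix x y assume x: "x \<in> {y. \<forall>x\<in>C. (\<Sum>i\<in>UNIV. x $ i * y $ i) = 0}"
    and y: "y \<in> {y. \<forall>x\<in>C. (\<Sum>i\<in>UNIV. x $ i * y $ i) = 0}"
  fix w assume "w \<in> C"
  then have "(\<Sum>i\<in>UNIV. w $ i * x $ i) = 0" "(\<Sum>i\<in>UNIV. w $ i * y $ i) = 0" using x y by blast+
  moreover have "(\<Sum>i\<in>UNIV. w $ i * (x + y) $ i) = (\<Sum>i\<in>UNIV. w $ i * x $ i) + (\<Sum>i\<in>UNIV. w $ i * y $ i)"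
    by (simp add: sum.distrib algebra_simps)
  ultimately show "(\<Sum>i\<in>UNIV. w $ i * (x + y) $ i) = 0" by simp
qed simp

definition Qs :: "('a::field^'n) set \<Rightarrow> 'n set \<Rightarrow> ('a^'n) set" where
  "Qs C S = {x. \<exists>w\<in>C. \<forall>i\<in>S. x$i = w$i}"

lemma Qs_subspace: assumes "vec.subspace C" shows "vec.subspace (Qs C S)"
  unfolding vec.subspace_def Qs_def
proof (intro conjI allI ballI impI)
  show "0 \<in> {x. \<exists>w\<in>C. \<forall>i\<in>S. x $ i = w $ i}" using assms vec.subspace_0 by fastforce
next
  fix c x assume "x \<in> {x. \<exists>w\<in>C. \<forall>i\<in>S. x $ i = w $ i}"
  then obtain w where "w \<in> C" "\<forall>i\<in>S. x $ i = w $ i" by blast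
  then show "c *s x \<in> {x. \<exists>w\<in>C. \<forall>i\<in>S. x $ i = w $ i}"
    using assms vec.subspace_scale by (intro CollectI bexI[of _ "c *s w"]) auto
next
  fix x y assume "x \<in> {x. \<exists>w\<in>C. \<forall>i\<in>S. x $ i = w $ i}" "y \<in> {x. \<exists>w\<in>C. \<forall>i\<in>S. x $ i = w $ i}"
  then obtain w w' where "w \<in> C" "\<forall>i\<in>S. x $ i = w $ i" "w' \<in> C" "\<forall>i\<in>S. y $ i = w' $ i" by blast
  then show "x + y \<in> {x. \<exists>w\<in>C. \<forall>i\<in>S. x $ i = w $ i}"
    using assms vec.subspace_add by (intro CollectI bexI[of _ "w + w'"]) auto
qed

lemma annihS:
  fixes C :: "('a::field^'n::finite) set"
  assumes C: "vec.subspace C" and z: "z \<notin> Qs C S"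
  shows "\<exists>y\<in>dual_code C. y \<noteq> 0 \<and> (\<forall>l. l \<notin> S \<longrightarrow> y$l = 0)"
proof -
  obtain y where y: "\<forall>x\<in>Qs C S. (\<Sum>i\<in>UNIV. x$i * y$i) = 0" "(\<Sum>i\<in>UNIV. z$i * y$i) \<noteq> 0"
    using annih[OF Qs_subspace[OF C] z] by blast
  have "y \<noteq> 0" using y(2) by auto
  moreover have "y \<in> dual_code C"
    unfolding dual_code_def using y(1) by (auto simp: Qs_def)
  moreover have "y$l = 0" if "l \<notin> S" for l
  proof -
    have "axis l 1 \<in> Qs C S" unfolding Qs_def using that vec.subspace_0[OF C]
      by (auto intro!: bexI[of _ 0] simp: axis_def)
    then have "(\<Sum>i\<in>UNIV. axis l 1 $ i * y$i) = 0" using y(1) by blast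
    moreover have "(\<Sum>i\<in>UNIV. axis l 1 $ i * y$i) = (\<Sum>i\<in>UNIV. if i = l then y$i else 0)"
      by (rule sum.cong) (auto simp: axis_def)
    ultimately show ?thesis by simp
  qed
  ultimately show ?thesis by blast
qed

lemma weight_le:
  fixes y :: "'a::zero^'n::finite"
  assumes "\<forall>l. l \<notin> S \<longrightarrow> y$l = 0"
  shows "weight y \<le> card S"
proof -
  have "supp y \<subseteq> S" using assms unfolding supp_def by auto
  then show ?thesis unfolding weight_def by (rule card_mono[rotated]) simp
qed

lemma factA:
  fixes C :: "('a::field^'n::finite) set"
  assumes C: "vec.subspace C" and W: "\<forall>y\<in>dual_code C. y \<noteq> 0 \<longrightarrow> d \<le> weight y"
    and S: "card S < d"
  shows "\<exists>w\<in>C. \<forall>i\<in>S. w$i = z$i"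
proof (rule ccontr)
  assume nt: "\<not> ?thesis"
  have "z \<notin> Qs C S"
  proof
    assume "z \<in> Qs C S"
    then obtain w where "w \<in> C" "\<forall>i\<in>S. z$i = w$i" unfolding Qs_def by blast
    then show False using nt by auto
  qed
  then obtain y where y: "y\<in>dual_code C" "y \<noteq> 0" "\<forall>l. l \<notin> S \<longrightarrow> y$l = 0"
    using annihS[OF C] by blast
  have "d \<le> weight y" using W y by blast
  moreover have "weight y \<le> card S" using weight_le y(3) by blast
  ultimately show False using S by linarith
qed

lemma comb:
  fixes p1 p2 A :: "'b \<Rightarrow> 'a::{finite,field}"
  assumes P1: "\<forall>y\<in>Y. p1 y \<noteq> 0" and P2: "\<forall>y\<in>Y. p2 y \<noteq> 0"
    and H: "\<forall>y\<in>Y. \<forall>y'\<in>Y. p2 y / p1 y = p2 y' / p1 y' \<longrightarrow> A y / p1 y = A y' / p1 y'"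
    and y0: "y0 \<in> Y" "A y0 \<noteq> 0"
  shows "\<exists>x z. x \<noteq> 0 \<and> z \<noteq> 0 \<and> (\<forall>y\<in>Y. x * p1 y + z * p2 y + A y \<noteq> 0)"
proof (rule ccontr)
  assume nt: "\<not> ?thesis"
  define z0 where "z0 = - A y0 / p2 y0"
  have z0: "z0 \<noteq> 0" using y0 P2 by (simp add: z0_def)
  define r where "r y = p2 y / p1 y" for y
  define f where "f y = - (z0 * r y + A y / p1 y)" for y
  have cov: "x \<in> f ` Y" for x
  proof (cases "x = 0")
    case True
    have "f y0 = 0" using y0 P1 P2 unfolding f_def r_def z0_def
      by (simp add: field_simps)
    then show ?thesis using True y0 by force
  next
    case False
    then obtain y where y: "y \<in> Y" "x * p1 y + z0 * p2 y + A y = 0" using nt z0 by blast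
    have p1: "p1 y \<noteq> 0" using P1 y(1) by blast
    have "x * p1 y = -(z0 * p2 y + A y)" using y(2) by (simp add: add_eq_0_iff2 add.assoc)
    then have "x = -(z0 * p2 y + A y) / p1 y" using p1 by (simp add: eq_divide_eq)
    also have "\<dots> = f y" unfolding f_def r_def using p1 by (simp add: field_simps)
    finally have "x = f y" .
    then show ?thesis using y by blast
  qed
  define h where "h \<rho> = f (SOME y. y \<in> Y \<and> r y = \<rho>)" for \<rho>
  have fh: "f ` Y = h ` (r ` Y)"
  proof -
    have "f y = h (r y)" if "y \<in> Y" for y
    proof -
      let ?y = "SOME y'. y' \<in> Y \<and> r y' = r y"
      have yy: "?y \<in> Y \<and> r ?y = r y" by (rule someI[of _ y]) (simp add: that)
      then have "A ?y / p1 ?y = A y / p1 y" using H[rule_format, OF conjunct1[OF yy] that] unfolding r_def by blast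
      then show ?thesis unfolding h_def f_def using \<open>?y \<in> Y \<and> r ?y = r y\<close> by simp
    qed
    then show ?thesis by (auto simp: image_image)
  qed
  have "r ` Y \<subseteq> UNIV - {0}" using P1 P2 unfolding r_def by auto
  then have "card (r ` Y) \<le> card (UNIV - {0::'a})" by (rule card_mono[rotated]) simp
  also have "\<dots> = CARD('a) - 1" by (simp add: card_Diff_singleton)
  finally have c1: "card (r ` Y) \<le> CARD('a) - 1" .
  have "f ` Y = UNIV" using cov by auto
  then have "CARD('a) \<le> card (r ` Y)" using fh card_image_le[of "r ` Y" h] by simp
  moreover have "0 < CARD('a)" by simp
  ultimately show False using c1 by linarith
qed

lemma sum_vanish:
  fixes f :: "'n::finite \<Rightarrow> 'a::comm_monoid_add"
  assumes "\<forall>i. i \<notin> S \<longrightarrow> f i = 0"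
  shows "(\<Sum>i\<in>UNIV. f i) = (\<Sum>i\<in>S. f i)"
  by (rule sum.mono_neutral_right) (use assms in auto)

lemma H_gen:
  fixes Y :: "('a::field^'n::finite) set"
  assumes propY: "\<forall>y\<in>Y. \<forall>y'\<in>Y. y$t2 / y$t1 = y'$t2 / y'$t1 \<longrightarrow> y = (y$t1 / y'$t1) *s y'"
    and nz: "\<forall>y\<in>Y. y$t1 \<noteq> 0"
  shows "\<forall>y\<in>Y. \<forall>y'\<in>Y. y$t2 / y$t1 = y'$t2 / y'$t1 \<longrightarrow>
     (\<Sum>t\<in>R. \<kappa> t * y$t) / y$t1 = (\<Sum>t\<in>R. \<kappa> t * y'$t) / y'$t1"
proof (intro ballI impI)
  fix y y' assume y: "y \<in> Y" "y' \<in> Y" and eq: "y$t2 / y$t1 = y'$t2 / y'$t1"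
  define l where "l = y$t1 / y'$t1"
  have l0: "l \<noteq> 0" using nz y unfolding l_def by simp
  have yy: "y = l *s y'" using propY y eq unfolding l_def by blast
  have "(\<Sum>t\<in>R. \<kappa> t * y$t) = l * (\<Sum>t\<in>R. \<kappa> t * y'$t)"
    by (subst yy) (simp add: sum_distrib_left algebra_simps)
  moreover have "y$t1 = l * y'$t1" by (subst yy) simp
  ultimately show "(\<Sum>t\<in>R. \<kappa> t * y$t) / y$t1 = (\<Sum>t\<in>R. \<kappa> t * y'$t) / y'$t1"
    using l0 by simp
qed

theorem mainTheorem10:
  fixes C :: "(('a::{finite,field})^'n::finite) set" and k :: nat
  assumes "odd CARD('a)"
    and "vec.subspace C"
    and "vec.dim C = k"
    and "dual_code C \<noteq> {0}"
    and "min_dist (dual_code C) > 3"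
  shows "covering_dim C \<noteq> \<infinity> \<and>
         int (the_enat (covering_dim C)) \<le> int k - int (min_dist (dual_code C)) + 2"
proof -
  note Csub = assms(2)
  define Dl where "Dl = dual_code C"
  define d where "d = min_dist Dl"
  have finDl: "finite (weight ` (Dl - {0}))" by simp
  have "0 \<in> Dl" unfolding Dl_def using vec.subspace_0[OF dual_subspace] .
  then have ne: "Dl - {0} \<noteq> {}" using assms(4) unfolding Dl_def by blast
  have dmin: "\<forall>y\<in>Dl. y \<noteq> 0 \<longrightarrow> d \<le> weight y"
    unfolding d_def min_dist_def using finDl by (auto intro: Min_le)
  have "d \<in> weight ` (Dl - {0})" unfolding d_def min_dist_def using finDl ne by (intro Min_in) auto
  then obtain y0 where y0: "y0 \<in> Dl" "y0 \<noteq> 0" "weight y0 = d" by blast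
  have d4: "d \<ge> 4" using assms(5) unfolding d_def Dl_def by simp
  have "weight y0 \<le> CARD('n)" using weight_le[of UNIV y0] by simp
  then have dn: "d \<le> CARD('n)" using y0 by simp
  have "d - 1 \<le> card (UNIV :: 'n set)" using dn by simp
  then obtain T :: "'n set" where T: "card T = d - 1"
    using obtain_subset_with_card_n by metis
  have Tlt: "card T < d" using T d4 by simp
  have factA': "\<exists>w\<in>C. \<forall>i\<in>T. w$i = z$i" for z
    using factA[OF Csub _ Tlt] dmin unfolding Dl_def by blast
  have small0: "y = 0" if "y \<in> Dl" "\<forall>l. l \<notin> S \<longrightarrow> y$l = 0" "card S < d" for y S
  proof (rule ccontr)
    assume "y \<noteq> 0"
    then have "d \<le> weight y" using dmin that(1) by blast
    moreover have "weight y \<le> card S" using weight_le that(2) by blast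
    ultimately show False using that(3) by linarith
  qed
  have "3 \<le> card T" using T d4 by simp
  then obtain T3 where T3: "T3 \<subseteq> T" "card T3 = 3" using obtain_subset_with_card_n by metis
  then obtain t1 t2 t3 where "T3 = {t1,t2,t3}" "t1 \<noteq> t2" "t2 \<noteq> t3" "t1 \<noteq> t3"
    using T3(2) unfolding card_3_iff by blast
  then have t: "t1 \<in> T" "t2 \<in> T" "t3 \<in> T" "t1 \<noteq> t2" "t1 \<noteq> t3" "t2 \<noteq> t3"
    using T3 by auto
  have "\<not> (UNIV :: 'a set) \<subseteq> {0,1}"
  proof
    assume sub: "(UNIV :: 'a set) \<subseteq> {0,1}"
    then have "CARD('a) \<le> card {0::'a,1}" by (rule card_mono[rotated]) simp
    moreover have "card {0::'a,1} \<le> CARD('a)" by (rule card_mono) auto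
    moreover have "card {0::'a,1} = 2" by simp
    ultimately show False using assms(1) by simp
  qed
  then obtain a :: 'a where a: "a \<noteq> 0" "a \<noteq> 1" by blast
  define Y where "Y = {y \<in> Dl. y \<noteq> 0 \<and> (\<exists>j. j \<notin> T \<and> (\<forall>i. i \<notin> insert j T \<longrightarrow> y$i = 0))}"
  have Ynz: "\<forall>y\<in>Y. \<forall>t\<in>T. y$t \<noteq> 0"
  proof (intro ballI notI)
    fix y t assume y: "y \<in> Y" and tT: "t \<in> T" and yt: "y$t = 0"
    from y obtain j where j: "y \<in> Dl" "y \<noteq> 0" "j \<notin> T" "\<forall>i. i \<notin> insert j T \<longrightarrow> y$i = 0"
      unfolding Y_def by blast
    have "\<forall>l. l \<notin> insert j T - {t} \<longrightarrow> y$l = 0" using j(4) yt by auto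
    moreover have "card (insert j T - {t}) < d"
      using j(3) tT T d4 by (simp add: card_Diff_singleton)
    ultimately have "y = 0" using small0 j(1) by blast
    then show False using j(2) by simp
  qed
  have propY: "\<forall>y\<in>Y. \<forall>y'\<in>Y. y$t2 / y$t1 = y'$t2 / y'$t1 \<longrightarrow> y = (y$t1 / y'$t1) *s y'"
  proof (intro ballI impI)
    fix y y' assume y: "y \<in> Y" and y': "y' \<in> Y" and eq: "y$t2 / y$t1 = y'$t2 / y'$t1"
    from y obtain j where j: "y \<in> Dl" "j \<notin> T" "\<forall>i. i \<notin> insert j T \<longrightarrow> y$i = 0"
      unfolding Y_def by blast
    from y' obtain j' where j': "y' \<in> Dl" "j' \<notin> T" "\<forall>i. i \<notin> insert j' T \<longrightarrow> y'$i = 0"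
      unfolding Y_def by blast
    have nz: "y$t1 \<noteq> 0" "y'$t1 \<noteq> 0" "y$t2 \<noteq> 0" "y'$t2 \<noteq> 0" using Ynz y y' t by auto
    define l where "l = y$t1 / y'$t1"
    define w where "w = y - l *s y'"
    have wD: "w \<in> Dl" unfolding w_def Dl_def
      using j(1) j'(1) unfolding Dl_def
      by (intro vec.subspace_diff[OF dual_subspace] vec.subspace_scale[OF dual_subspace]) auto
    have w1: "w$t1 = 0" unfolding w_def l_def using nz by simp
    have "y$t2 = y$t1 * y'$t2 / y'$t1" using eq nz by (simp add: field_simps)
    then have w2: "w$t2 = 0" unfolding w_def l_def using nz by simp
    let ?S = "insert j (insert j' (T - {t1,t2}))"
    have "\<forall>i. i \<notin> ?S \<longrightarrow> w$i = 0" using j(3) j'(3) w1 w2 unfolding w_def by auto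
    moreover have "card ?S < d"
    proof -
      have a1: "card ?S \<le> Suc (card (insert j' (T - {t1,t2})))" by (simp add: card_insert_if)
      have a2: "card (insert j' (T - {t1,t2})) \<le> Suc (card (T - {t1,t2}))" by (simp add: card_insert_if)
      have "card ?S \<le> Suc (Suc (card (T - {t1,t2})))" using a1 a2 by linarith
      moreover have "card (T - {t1,t2}) = card T - 2" using t by (simp add: card_Diff_subset)
      ultimately show ?thesis using T d4 by linarith
    qed
    ultimately have "w = 0" using small0 wD by blast
    then show "y = l *s y'" unfolding w_def by simp
  qed
  have sumT: "(\<Sum>t\<in>T. (\<chi> i. if i = t1 then x else if i = t2 then z else \<kappa> i) $ t * y$t)
      = x * y$t1 + z * y$t2 + (\<Sum>t\<in>T-{t1,t2}. \<kappa> t * y$t)" for x z \<kappa> and y :: "'a^'n"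
  proof -
    let ?f = "\<lambda>t. (\<chi> i. if i = t1 then x else if i = t2 then z else \<kappa> i) $ t * y$t"
    have finT: "finite T" by simp
    have "(\<Sum>t\<in>T. ?f t) = ?f t1 + (\<Sum>t\<in>T-{t1}. ?f t)" using sum.remove[OF finT t(1)] .
    also have "(\<Sum>t\<in>T-{t1}. ?f t) = ?f t2 + (\<Sum>t\<in>T-{t1}-{t2}. ?f t)"
      by (rule sum.remove) (use t in auto)
    also have "T-{t1}-{t2} = T-{t1,t2}" by auto
    also have "(\<Sum>t\<in>T-{t1,t2}. ?f t) = (\<Sum>t\<in>T-{t1,t2}. \<kappa> t * y$t)"
      by (rule sum.cong) auto
    finally show ?thesis using t by (simp add: add.assoc)
  qed
  have goodc: "\<exists>c. (\<forall>t\<in>T. c$t \<noteq> (0::'a)) \<and> (\<forall>y\<in>Y. (\<Sum>t\<in>T. c$t * y$t) \<noteq> 0)"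
    if ex: "\<exists>x z. x \<noteq> 0 \<and> z \<noteq> 0 \<and> (\<forall>y\<in>Y. x * y$t1 + z * y$t2 + (\<Sum>t\<in>T-{t1,t2}. \<kappa> t * y$t) \<noteq> 0)"
      and k0: "\<forall>t. \<kappa> t \<noteq> 0" for \<kappa>
  proof -
    obtain x z where xz: "x \<noteq> 0" "z \<noteq> 0" "\<forall>y\<in>Y. x * y$t1 + z * y$t2 + (\<Sum>t\<in>T-{t1,t2}. \<kappa> t * y$t) \<noteq> 0"
      using ex by blast
    show ?thesis
      by (rule exI[of _ "\<chi> i. if i = t1 then x else if i = t2 then z else \<kappa> i"]) (use sumT xz k0 in auto)
  qed
  have P1: "\<forall>y\<in>Y. y$t1 \<noteq> 0" and P2: "\<forall>y\<in>Y. y$t2 \<noteq> 0" using Ynz t by auto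
  have HH: "\<forall>y\<in>Y. \<forall>y'\<in>Y. y$t2 / y$t1 = y'$t2 / y'$t1 \<longrightarrow>
     (\<Sum>t\<in>T-{t1,t2}. \<kappa> t * y$t) / y$t1 = (\<Sum>t\<in>T-{t1,t2}. \<kappa> t * y'$t) / y'$t1" for \<kappa>
    by (rule H_gen[OF propY P1])
  have "\<exists>c. (\<forall>t\<in>T. c$t \<noteq> (0::'a)) \<and> (\<forall>y\<in>Y. (\<Sum>t\<in>T. c$t * y$t) \<noteq> 0)"
  proof (cases "Y = {}")
    case True then show ?thesis by (intro exI[of _ "\<chi> i. 1"]) simp
  next
    case False then obtain y1 where y1: "y1 \<in> Y" by blast
    define \<kappa>1 :: "'n \<Rightarrow> 'a" where "\<kappa>1 t = 1" for t
    define \<kappa>a :: "'n \<Rightarrow> 'a" where "\<kappa>a t = (if t = t3 then a else 1)" for t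
    have k1: "\<forall>t. \<kappa>1 t \<noteq> 0" and ka: "\<forall>t. \<kappa>a t \<noteq> 0" using a unfolding \<kappa>1_def \<kappa>a_def by auto
    show ?thesis
    proof (cases "\<exists>x z. x \<noteq> 0 \<and> z \<noteq> 0 \<and> (\<forall>y\<in>Y. x * y$t1 + z * y$t2 + (\<Sum>t\<in>T-{t1,t2}. \<kappa>1 t * y$t) \<noteq> 0)")
      case True then show ?thesis using goodc k1 by blast
    next
      case F1: False
      show ?thesis
      proof (cases "\<exists>x z. x \<noteq> 0 \<and> z \<noteq> 0 \<and> (\<forall>y\<in>Y. x * y$t1 + z * y$t2 + (\<Sum>t\<in>T-{t1,t2}. \<kappa>a t * y$t) \<noteq> 0)")
        case True then show ?thesis using goodc ka by blast
      next
        case F2: False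
        have A1: "(\<Sum>t\<in>T-{t1,t2}. \<kappa>1 t * y1$t) = 0"
        proof (rule ccontr)
          assume "(\<Sum>t\<in>T-{t1,t2}. \<kappa>1 t * y1$t) \<noteq> 0"
          from comb[OF P1 P2 HH y1 this] F1 show False by blast
        qed
        have A2: "(\<Sum>t\<in>T-{t1,t2}. \<kappa>a t * y1$t) = 0"
        proof (rule ccontr)
          assume "(\<Sum>t\<in>T-{t1,t2}. \<kappa>a t * y1$t) \<noteq> 0"
          from comb[OF P1 P2 HH y1 this] F2 show False by blast
        qed
        have "(\<Sum>t\<in>T-{t1,t2}. \<kappa>1 t * y1$t) - (\<Sum>t\<in>T-{t1,t2}. \<kappa>a t * y1$t)
            = (\<Sum>t\<in>T-{t1,t2}. (\<kappa>1 t - \<kappa>a t) * y1$t)"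
          by (simp add: sum_subtractf[symmetric] algebra_simps)
        also have "\<dots> = (\<Sum>t\<in>T-{t1,t2}. if t = t3 then (1 - a) * y1$t3 else 0)"
          by (rule sum.cong) (auto simp: \<kappa>1_def \<kappa>a_def)
        also have "\<dots> = (1 - a) * y1$t3" using t by simp
        finally have "(1 - a) * y1$t3 = 0" using A1 A2 by simp
        moreover have "y1$t3 \<noteq> 0" using Ynz y1 t by blast
        ultimately show ?thesis using a by simp
      qed
    qed
  qed
  then obtain c where c: "\<forall>t\<in>T. c$t \<noteq> (0::'a)" "\<forall>y\<in>Y. (\<Sum>t\<in>T. c$t * y$t) \<noteq> 0"
    by blast
  define D where "D = {w \<in> C. \<exists>l. \<forall>t\<in>T. w$t = l * c$t}"
  have DC: "D \<subseteq> C" unfolding D_def by auto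
  have Dsub: "vec.subspace D"
    unfolding vec.subspace_def
  proof (intro conjI allI ballI)
    show "0 \<in> D" unfolding D_def using vec.subspace_0[OF Csub] by (auto intro!: exI[of _ 0])
  next
    fix x y assume "x \<in> D" "y \<in> D"
    then obtain l l' where "x \<in> C" "\<forall>t\<in>T. x$t = l * c$t" "y \<in> C" "\<forall>t\<in>T. y$t = l' * c$t"
      unfolding D_def by blast
    then show "x + y \<in> D" unfolding D_def using vec.subspace_add[OF Csub]
      by (auto intro!: exI[of _ "l + l'"] simp: algebra_simps)
  next
    fix r :: 'a and x assume "x \<in> D"
    then obtain l where "x \<in> C" "\<forall>t\<in>T. x$t = l * c$t" unfolding D_def by blast
    then show "r *s x \<in> D" unfolding D_def using vec.subspace_scale[OF Csub]
      by (auto intro!: exI[of _ "r * l"] simp: algebra_simps)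
  qed
  obtain w0 where w0: "w0 \<in> C" "\<forall>t\<in>T. w0$t = c$t" using factA' by blast
  have w0D: "w0 \<in> D" unfolding D_def using w0 by (auto intro!: exI[of _ 1])
  have SuppD: "Supp D = UNIV"
  proof -
    have "\<exists>w\<in>D. w$i \<noteq> 0" for i
    proof (cases "i \<in> T")
      case True
      then have "w0$i \<noteq> 0" using w0(2) c(1) by simp
      then show ?thesis using w0D by blast
    next
      case iT: False
      show ?thesis
      proof (rule ccontr)
        assume nt: "\<not> ?thesis"
        define z where "z = (\<chi> l. if l = i then 1 else c$l)"
        have "z \<notin> Qs C (insert i T)"
        proof
          assume "z \<in> Qs C (insert i T)"
          then obtain w where w: "w \<in> C" "\<forall>l\<in>insert i T. z$l = w$l" unfolding Qs_def by blast
          then have "w \<in> D" unfolding D_def z_def using iT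
            by (auto intro!: exI[of _ 1] simp: split: if_splits)
          moreover have "w$i = 1" using w unfolding z_def by auto
          ultimately show False using nt by auto
        qed
        then obtain y where y: "y \<in> dual_code C" "y \<noteq> 0" "\<forall>l. l \<notin> insert i T \<longrightarrow> y$l = 0"
          using annihS[OF Csub] by blast
        have yY: "y \<in> Y" unfolding Y_def Dl_def using y iT by blast
        have "(\<Sum>l\<in>UNIV. w0$l * y$l) = 0" using y(1) w0(1) unfolding dual_code_def by blast
        moreover have "(\<Sum>l\<in>UNIV. w0$l * y$l) = (\<Sum>l\<in>insert i T. w0$l * y$l)"
          by (rule sum_vanish) (use y(3) in auto)
        moreover have "w0$i = 0" using nt w0D by auto
        moreover have "(\<Sum>l\<in>insert i T. w0$l * y$l) = w0$i * y$i + (\<Sum>l\<in>T. w0$l * y$l)"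
          using iT by simp
        moreover have "(\<Sum>l\<in>T. w0$l * y$l) = (\<Sum>l\<in>T. c$l * y$l)"
          using w0(2) by simp
        ultimately have "(\<Sum>l\<in>T. c$l * y$l) = 0" by simp
        then show False using c(2) yY by blast
      qed
    qed
    then show ?thesis unfolding Supp_def supp_def by blast
  qed
  have dimD: "vec.dim D + d \<le> k + 2"
  proof -
    define K where "K = {x \<in> C. \<forall>t\<in>T. x$t = 0}"
    define Zc where "Zc = {x :: 'a^'n. \<forall>i. i \<notin> - T \<longrightarrow> x$i = 0}"
    have Zsub: "vec.subspace Zc" unfolding Zc_def vec.subspace_def by auto
    have sumU: "{x + y |x y. x \<in> C \<and> y \<in> Zc} = UNIV"
    proof (rule set_eqI, rule iffI)
      fix z :: "'a^'n"
      obtain w where w: "w \<in> C" "\<forall>i\<in>T. w$i = z$i" using factA' by blast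
      have "z - w \<in> Zc" unfolding Zc_def using w by auto
      moreover have "z = w + (z - w)" by simp
      ultimately show "z \<in> {x + y |x y. x \<in> C \<and> y \<in> Zc}" using w(1) by blast
    qed simp
    have CZ: "C \<inter> Zc = K" unfolding K_def Zc_def by auto
    have "vec.dim (UNIV :: ('a^'n) set) + vec.dim K = k + vec.dim Zc"
      using vec.dim_sums_Int[OF Csub Zsub] sumU CZ assms(3) by simp
    moreover have "vec.dim (UNIV :: ('a^'n) set) = CARD('n)"
      by (simp add: card_cart_basis)
    moreover have "vec.dim Zc = card (- T)" unfolding Zc_def by (rule dim_substandard_cart)
    moreover have "card (- T) = CARD('n) - card T" by (simp add: Compl_eq_Diff_UNIV card_Diff_subset)
    moreover have "card T \<le> CARD('n)" by (simp add: card_mono)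
    ultimately have dK: "vec.dim K + (d - 1) = k" using T by linarith
    have Ksub: "D \<subseteq> vec.span (insert w0 K)"
    proof
      fix w assume "w \<in> D"
      then obtain l where wl: "w \<in> C" "\<forall>t\<in>T. w$t = l * c$t" unfolding D_def by blast
      have "w - l *s w0 \<in> K" unfolding K_def using wl w0
        vec.subspace_diff[OF Csub wl(1) vec.subspace_scale[OF Csub w0(1)]] by auto
      then have "w - l *s w0 \<in> vec.span (insert w0 K)" by (simp add: vec.span_base)
      moreover have "l *s w0 \<in> vec.span (insert w0 K)"
        by (simp add: vec.span_base vec.span_scale)
      ultimately have "(w - l *s w0) + l *s w0 \<in> vec.span (insert w0 K)" by (rule vec.span_add)
      then show "w \<in> vec.span (insert w0 K)" by simp
    qed
    have "vec.dim D \<le> vec.dim (insert w0 K)" by (rule vec.dim_mono[OF Ksub])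
    also have "\<dots> \<le> vec.dim K + 1" by (simp add: vec.dim_insert)
    finally show ?thesis using dK d4 by linarith
  qed
  have dimD0: "0 < vec.dim D"
  proof -
    have "w0 \<noteq> 0" using w0 c t by (metis zero_index)
    then have "\<not> D \<subseteq> {0}" using w0D by blast
    then show ?thesis by (metis vec.dim_eq_0 gr0I)
  qed
  have SuppC: "Supp C = UNIV"
    using SuppD DC unfolding Supp_def by blast
  define L where "L = (LEAST r. 0 < r \<and>
             (\<exists>D. vec.subspace D \<and> D \<subseteq> C \<and> vec.dim D = r \<and> Supp D = UNIV))"
  have cd: "covering_dim C = enat L" unfolding covering_dim_def L_def using SuppC by simp
  have "L \<le> vec.dim D" unfolding L_def
    by (rule Least_le) (use dimD0 Dsub DC SuppD in blast)
  then show ?thesis using cd dimD unfolding d_def Dl_def by simp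
qed

end
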